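(* Let $V$ be an object of $\mathcal{E}_q^{deg}$ and let $$E_V=\prod_{\alpha:A\hookrightarrow V,\ A\in\mathcal{S}_V\setminus\{V\}}(1+e_\alpha)\in\mathbb{F}_2[\mathrm{End}_{\mathrm{Sp}(\mathcal{E}_q^{deg})}(V)],$$ the product over all proper subobjects of $V$. Then (1) $E_V\cdot E_V=E_V$, and (2) $Q_V\cdot E_V\cong iso_V$; in particular $\mathrm{Hom}_{\mathcal{F}_{iso}}(iso_V,F)\cong F(E_V)\cdot F(V)$ for every $F\in\mathcal{F}_{iso}$.
   Context: $\mathcal{E}$: all $\mathbb{F}_2$-vector spaces. $\mathcal{E}_q^{deg}$: objects finite-dimensional quadratic spaces over $\mathbb{F}_2$ (possibly degenerate), morphisms injective linear maps preserving quadratic forms. $\mathrm{Sp}(\mathcal{E}_q^{deg})$: same objects, morphisms spans $[V\leftarrow D\rightarrow W]$ up to iso of $D$, composed by pullback. $\mathcal{F}_{iso}=\mathrm{Func}(\mathrm{Sp}(\mathcal{E}_q^{deg}),\mathcal{E})$. $\mathcal{S}_V$ is the set of subobjects $\alpha:A\hookrightarrow V$ of $V$ in $\mathcal{E}_q^{deg}$ (linear subspaces with restricted form); $\mathcal{S}_V\setminus\{V\}$ the proper ones. $e_\alpha=[V\xleftarrow{\alpha}A\xrightarrow{\alpha}V]$. $Q_V=\mathbb{F}_2[\mathrm{Hom}_{\mathrm{Sp}(\mathcal{E}_q^{deg})}(V,-)]$, and for $e$ in the monoid algebra of $\mathrm{End}(V)$, $Q_V\cdot e$ is the image of $x\mapsto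 x\circ e$ on $Q_V$. The isotropic functor $iso_V$ is the image of $a_V:Q_V\to DQ_V$, where $DF=(-)^*\circ F\circ tr^{op}$, $tr[V\leftarrow X\rightarrow W]=[W\leftarrow X\rightarrow V]$, and $a_V$ corresponds by Yoneda to the linear form on $\mathbb{F}_2[\mathrm{End}(V)]$ equal to $1$ on $\mathrm{Id}_V$ and $0$ on all other basis elements. *)

theory Defs
  imports Main
begin

type_synonym vec = "nat \<Rightarrow> bool"
type_synonym qobj = "nat \<times> (vec \<Rightarrow> bool)"
  (* an object: dimension n and quadratic form q on F2^n *)
type_synonym mor = "(vec \<times> vec) set"
  (* a morphism of Sp(E_q^deg): a span [V <- D -> W] up to iso of D, represented
     by the image of D in V x W (the graph of a partial injective isometry) *)

definition vadd :: "vec \<Rightarrow> vec \<Rightarrow> vec" where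
  "vadd x y = (\<lambda>i. x i \<noteq> y i)"

definition vzero :: vec where
  "vzero = (\<lambda>i. False)"

definition qcarrier :: "qobj \<Rightarrow> vec set" where
  "qcarrier V = {x. \<forall>i\<ge>fst V. \<not> x i}"

definition qf :: "qobj \<Rightarrow> vec \<Rightarrow> bool" where
  "qf V = snd V"

definition polar :: "qobj \<Rightarrow> vec \<Rightarrow> vec \<Rightarrow> bool" where
  "polar V x y = (qf V (vadd x y) \<noteq> (qf V x \<noteq> qf V y))"

text \<open>Objects of E_q^deg (skeleton): F2^n with a (possibly degenerate) quadratic form,
  normalised to be False outside F2^n.\<close>
definition is_qobj :: "qobj \<Rightarrow> bool" where
  "is_qobj V \<longleftrightarrow>
     (\<forall>x. x \<notin> qcarrier V \<longrightarrow> \<not> qf V x) \<and>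
     \<not> qf V vzero \<and>
     (\<forall>x\<in>qcarrier V. \<forall>y\<in>qcarrier V. \<forall>z\<in>qcarrier V.
        polar V (vadd x y) z = (polar V x z \<noteq> polar V y z))"

definition is_subspace :: "qobj \<Rightarrow> vec set \<Rightarrow> bool" where
  "is_subspace V U \<longleftrightarrow> U \<subseteq> qcarrier V \<and> vzero \<in> U \<and>
     (\<forall>x\<in>U. \<forall>y\<in>U. vadd x y \<in> U)"

definition Hom :: "qobj \<Rightarrow> qobj \<Rightarrow> mor set" where
  "Hom V W = {G. G \<subseteq> qcarrier V \<times> qcarrier W \<and> (vzero, vzero) \<in> G \<and>
      (\<forall>x y x' y'. (x, y) \<in> G \<longrightarrow> (x', y') \<in> G \<longrightarrow> (vadd x x', vadd y y') \<in> G) \<and>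
      (\<forall>x y y'. (x, y) \<in> G \<longrightarrow> (x, y') \<in> G \<longrightarrow> y = y') \<and>
      (\<forall>x x' y. (x, y) \<in> G \<longrightarrow> (x', y) \<in> G \<longrightarrow> x = x') \<and>
      (\<forall>x y. (x, y) \<in> G \<longrightarrow> qf W y = qf V x)}"

text \<open>Composition g o f (pullback of spans = relational composition of graphs).\<close>
definition scomp :: "mor \<Rightarrow> mor \<Rightarrow> mor" where
  "scomp g f = f O g"

definition idm :: "qobj \<Rightarrow> mor" where
  "idm V = Id_on (qcarrier V)"

definition tr :: "mor \<Rightarrow> mor" where
  "tr f = converse f"

definition subobjs :: "qobj \<Rightarrow> vec set set" where
  "subobjs V = {U. is_subspace V U}"

definition proper_subobjs :: "qobj \<Rightarrow> vec set set" where
  "proper_subobjs V = {U \<in> subobjs V. U \<noteq> qcarrier V}"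

definition e_sub :: "vec set \<Rightarrow> mor" where
  "e_sub U = Id_on U"

section \<open>F2-linear combinations of morphisms (finite sets = F2 coefficient vectors)\<close>

definition alg_add :: "mor set \<Rightarrow> mor set \<Rightarrow> mor set" where
  "alg_add X Y = (X - Y) \<union> (Y - X)"

text \<open>bilinear extension of composition: X * Y = sum over a in X, b in Y of a o b\<close>
definition alg_mult :: "mor set \<Rightarrow> mor set \<Rightarrow> mor set" where
  "alg_mult X Y = {h. odd (card {(a, b). a \<in> X \<and> b \<in> Y \<and> scomp a b = h})}"

definition E_elem :: "qobj \<Rightarrow> mor set" where
  "E_elem V = Finite_Set.fold
     (\<lambda>U acc. alg_mult (alg_add {idm V} {e_sub U}) acc) {idm V} (proper_subobjs V)"

text \<open>(Q_V . e)(W) = image of x |-> x o e on Q_V(W) = F2[Hom(V,W)]\<close>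
definition QE :: "qobj \<Rightarrow> mor set \<Rightarrow> qobj \<Rightarrow> mor set set" where
  "QE V e W = (\<lambda>x. alg_mult x e) ` Pow (Hom V W)"

definition Qmap :: "mor \<Rightarrow> mor set \<Rightarrow> mor set" where
  "Qmap h x = alg_mult {h} x"

text \<open>DQ_V(W) = F2[Hom(V,W)]^*; a linear form is represented by the set of basis
  elements on which it takes value 1. a_V(W)(f)(g) = delta_Id(tr f o g),
  extended linearly in f.\<close>
definition aV :: "qobj \<Rightarrow> qobj \<Rightarrow> mor set \<Rightarrow> mor set" where
  "aV V W x = {g \<in> Hom V W. odd (card {f \<in> x. scomp (tr f) g = idm V})}"

definition isoV :: "qobj \<Rightarrow> qobj \<Rightarrow> mor set set" where
  "isoV V W = aV V W ` Pow (Hom V W)"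

text \<open>DQ_V on a morphism h : W -> W': phi |-> phi o Q_V(tr h)\<close>
definition DQmap :: "qobj \<Rightarrow> qobj \<Rightarrow> mor \<Rightarrow> mor set \<Rightarrow> mor set" where
  "DQmap V W' h S = {g' \<in> Hom V W'. scomp (tr h) g' \<in> S}"

definition is_F2space :: "'b::ab_group_add set \<Rightarrow> bool" where
  "is_F2space S \<longleftrightarrow> 0 \<in> S \<and> (\<forall>x\<in>S. \<forall>y\<in>S. x + y \<in> S) \<and> (\<forall>x\<in>S. x + x = 0)"

definition is_functor ::
  "(qobj \<Rightarrow> 'b::ab_group_add set) \<Rightarrow> (qobj \<Rightarrow> qobj \<Rightarrow> mor \<Rightarrow> 'b \<Rightarrow> 'b) \<Rightarrow> bool" where
  "is_functor Fob Fmor \<longleftrightarrow>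
     (\<forall>W. is_qobj W \<longrightarrow> is_F2space (Fob W)) \<and>
     (\<forall>W W' h. is_qobj W \<longrightarrow> is_qobj W' \<longrightarrow> h \<in> Hom W W' \<longrightarrow>
        (\<forall>x\<in>Fob W. Fmor W W' h x \<in> Fob W') \<and>
        (\<forall>x\<in>Fob W. \<forall>y\<in>Fob W. Fmor W W' h (x + y) = Fmor W W' h x + Fmor W W' h y)) \<and>
     (\<forall>W. is_qobj W \<longrightarrow> (\<forall>x\<in>Fob W. Fmor W W (idm W) x = x)) \<and>
     (\<forall>W1 W2 W3 f g. is_qobj W1 \<longrightarrow> is_qobj W2 \<longrightarrow> is_qobj W3 \<longrightarrow>
        f \<in> Hom W1 W2 \<longrightarrow> g \<in> Hom W2 W3 \<longrightarrow>
        (\<forall>x\<in>Fob W1. Fmor W1 W3 (scomp g f) x = Fmor W2 W3 g (Fmor W1 W2 f x)))"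

definition Falg :: "(qobj \<Rightarrow> qobj \<Rightarrow> mor \<Rightarrow> 'b::ab_group_add \<Rightarrow> 'b) \<Rightarrow> qobj \<Rightarrow> mor set \<Rightarrow> 'b \<Rightarrow> 'b" where
  "Falg Fmor V X v = (\<Sum>e\<in>X. Fmor V V e v)"

text \<open>Hom_{F_iso}(iso_V, F): natural transformations, normalised to 0 off their domain\<close>
definition nat_trans_iso ::
  "qobj \<Rightarrow> (qobj \<Rightarrow> 'b::ab_group_add set) \<Rightarrow> (qobj \<Rightarrow> qobj \<Rightarrow> mor \<Rightarrow> 'b \<Rightarrow> 'b)
     \<Rightarrow> (qobj \<Rightarrow> mor set \<Rightarrow> 'b) set" where
  "nat_trans_iso V Fob Fmor = {\<tau>.
     (\<forall>W. \<not> is_qobj W \<longrightarrow> (\<forall>S. \<tau> W S = 0)) \<and>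
     (\<forall>W. is_qobj W \<longrightarrow>
        (\<forall>S\<in>isoV V W. \<tau> W S \<in> Fob W) \<and>
        (\<forall>S. S \<notin> isoV V W \<longrightarrow> \<tau> W S = 0) \<and>
        (\<forall>S\<in>isoV V W. \<forall>T\<in>isoV V W. \<tau> W (alg_add S T) = \<tau> W S + \<tau> W T)) \<and>
     (\<forall>W W' h. is_qobj W \<longrightarrow> is_qobj W' \<longrightarrow> h \<in> Hom W W' \<longrightarrow>
        (\<forall>S\<in>isoV V W. \<tau> W' (DQmap V W' h S) = Fmor W W' h (\<tau> W S)))}"

end

theory Submission
  imports Defs
begin

lemma odd_card_symdiff:
  assumes "finite A" "finite B"
  shows "odd (card ((A - B) \<union> (B - A))) = (odd (card A) \<noteq> odd (card B))"
proof -
  have a: "card A = card (A - B) + card (A \<inter> B)"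
  proof -
    have "card ((A - B) \<union> (A \<inter> B)) = card (A - B) + card (A \<inter> B)"
      by (rule card_Un_disjoint) (use assms in auto)
    moreover have "(A - B) \<union> (A \<inter> B) = A" by blast
    ultimately show ?thesis by simp
  qed
  have b: "card B = card (B - A) + card (A \<inter> B)"
  proof -
    have "card ((B - A) \<union> (A \<inter> B)) = card (B - A) + card (A \<inter> B)"
      by (rule card_Un_disjoint) (use assms in auto)
    moreover have "(B - A) \<union> (A \<inter> B) = B" by blast
    ultimately show ?thesis by simp
  qed
  have c: "card ((A - B) \<union> (B - A)) = card (A - B) + card (B - A)"
    using assms by (intro card_Un_disjoint) auto
  show ?thesis using a b c by auto
qed

lemma alg_add_mem: "h \<in> alg_add X Y \<longleftrightarrow> (h \<in> X) \<noteq> (h \<in> Y)"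
  by (auto simp: alg_add_def)

lemma alg_add_empty[simp]: "alg_add X {} = X" "alg_add {} X = X" "alg_add X X = {}"
  by (auto simp: alg_add_def)

lemma alg_add_comm: "alg_add X Y = alg_add Y X"
  by (auto simp: alg_add_def)

lemma alg_add_assoc: "alg_add (alg_add X Y) Z = alg_add X (alg_add Y Z)"
  by (auto simp: alg_add_def)

lemma insert_alg_add: "x \<notin> X \<Longrightarrow> insert x X = alg_add {x} X"
  by (auto simp: alg_add_def)

lemma finite_alg_add[simp]: "finite X \<Longrightarrow> finite Y \<Longrightarrow> finite (alg_add X Y)"
  by (auto simp: alg_add_def)

lemma alg_mult_subset: "alg_mult X Y \<subseteq> {scomp a b | a b. a \<in> X \<and> b \<in> Y}"
proof
  fix h assume "h \<in> alg_mult X Y"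
  then have "{(a, b). a \<in> X \<and> b \<in> Y \<and> scomp a b = h} \<noteq> {}"
    unfolding alg_mult_def by (metis (no_types, lifting) card.empty even_zero mem_Collect_eq)
  then show "h \<in> {scomp a b | a b. a \<in> X \<and> b \<in> Y}" by blast
qed

lemma finite_alg_mult[simp]: "finite X \<Longrightarrow> finite Y \<Longrightarrow> finite (alg_mult X Y)"
proof -
  assume "finite X" "finite Y"
  then have "finite ((\<lambda>(a,b). scomp a b) ` (X \<times> Y))" by auto
  moreover have "{scomp a b | a b. a \<in> X \<and> b \<in> Y} = (\<lambda>(a,b). scomp a b) ` (X \<times> Y)" by auto
  ultimately have "alg_mult X Y \<subseteq> (\<lambda>(a,b). scomp a b) ` (X \<times> Y)"
    using alg_mult_subset[of X Y] by simp
  then show ?thesis by (rule finite_subset) (use \<open>finite X\<close> \<open>finite Y\<close> in auto)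
qed

lemma alg_mult_empty[simp]: "alg_mult {} Y = {}" "alg_mult X {} = {}"
  by (auto simp: alg_mult_def)

lemma alg_mult_add_left:
  assumes "finite X" "finite Y" "finite Z"
  shows "alg_mult (alg_add X Y) Z = alg_add (alg_mult X Z) (alg_mult Y Z)"
proof -
  { fix h
    let ?P = "\<lambda>X. {(a, b). a \<in> X \<and> b \<in> Z \<and> scomp a b = h}"
    have e: "?P (alg_add X Y) = (?P X - ?P Y) \<union> (?P Y - ?P X)" by (auto simp: alg_add_def)
    have f: "finite (?P W)" if "finite W" for W
      by (rule finite_subset[of _ "W \<times> Z"]) (use that assms in auto)
    have "odd (card (?P (alg_add X Y))) = (odd (card (?P X)) \<noteq> odd (card (?P Y)))"
      unfolding e by (rule odd_card_symdiff) (use f assms in auto) }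
  then show ?thesis by (auto simp: alg_mult_def alg_add_def)
qed

lemma alg_mult_add_right:
  assumes "finite X" "finite Y" "finite Z"
  shows "alg_mult Z (alg_add X Y) = alg_add (alg_mult Z X) (alg_mult Z Y)"
proof -
  { fix h
    let ?P = "\<lambda>X. {(a, b). a \<in> Z \<and> b \<in> X \<and> scomp a b = h}"
    have e: "?P (alg_add X Y) = (?P X - ?P Y) \<union> (?P Y - ?P X)" by (auto simp: alg_add_def)
    have f: "finite (?P W)" if "finite W" for W
      by (rule finite_subset[of _ "Z \<times> W"]) (use that assms in auto)
    have "odd (card (?P (alg_add X Y))) = (odd (card (?P X)) \<noteq> odd (card (?P Y)))"
      unfolding e by (rule odd_card_symdiff) (use f assms in auto) }
  then show ?thesis by (auto simp: alg_mult_def alg_add_def)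
qed

lemma alg_mult_single: "alg_mult {a} {b} = {scomp a b}"
proof -
  have "{(a', b'). a' \<in> {a} \<and> b' \<in> {b} \<and> scomp a' b' = h} = (if h = scomp a b then {(a,b)} else {})" for h
    by auto
  then show ?thesis by (auto simp: alg_mult_def)
qed

lemma scomp_assoc: "scomp (scomp a b) c = scomp a (scomp b c)"
  by (simp add: scomp_def O_assoc)

lemma alg_mult_assoc1:
  assumes "finite Z"
  shows "alg_mult (alg_mult {x} {y}) Z = alg_mult {x} (alg_mult {y} Z)"
  using assms
proof (induction Z rule: finite_induct)
  case (insert z Z)
  show ?case
    using insert
    by (simp add: insert_alg_add[OF insert(2)] alg_mult_add_right alg_mult_single scomp_assoc)
qed simp

lemma alg_mult_assoc2:
  assumes "finite Y" "finite Z"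
  shows "alg_mult (alg_mult {x} Y) Z = alg_mult {x} (alg_mult Y Z)"
  using assms
proof (induction Y rule: finite_induct)
  case (insert y Y)
  show ?case
    using insert alg_mult_assoc1[of Z x y]
    by (simp add: insert_alg_add[OF insert(2)] alg_mult_add_right alg_mult_add_left)
qed simp

lemma alg_mult_assoc:
  assumes "finite X" "finite Y" "finite Z"
  shows "alg_mult (alg_mult X Y) Z = alg_mult X (alg_mult Y Z)"
  using assms
proof (induction X rule: finite_induct)
  case (insert x X)
  show ?case
    using insert alg_mult_assoc2[of Y Z x]
    by (simp add: insert_alg_add[OF insert(2)] alg_mult_add_left)
qed simp

lemma alg_mult_left_single: "alg_mult {a} X = {h. odd (card {b \<in> X. scomp a b = h})}"
proof -
  have "{(a', b). a' \<in> {a} \<and> b \<in> X \<and> scomp a' b = h} = Pair a ` {b \<in> X. scomp a b = h}" for h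
    by auto
  moreover have "card (Pair a ` B) = card B" for B :: "mor set"
    by (rule card_image) (auto simp: inj_on_def)
  ultimately show ?thesis by (simp add: alg_mult_def)
qed

lemma alg_mult_left_id:
  assumes "\<And>b. b \<in> X \<Longrightarrow> scomp a b = b"
  shows "alg_mult {a} X = X"
proof -
  have "{b \<in> X. scomp a b = h} = (if h \<in> X then {h} else {})" for h
    using assms by auto
  then show ?thesis by (auto simp: alg_mult_left_single)
qed

lemma alg_mult_right_id:
  assumes "\<And>a. a \<in> X \<Longrightarrow> scomp a b = a"
  shows "alg_mult X {b} = X"
proof -
  have "{(a, b'). a \<in> X \<and> b' \<in> {b} \<and> scomp a b' = h} = (if h \<in> X then {(h,b)} else {})" for h
    using assms by auto
  then show ?thesis by (auto simp: alg_mult_def)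
qed

lemma alg_mult_zero_left:
  assumes "finite X" "finite Y" "\<And>a. a \<in> X \<Longrightarrow> alg_mult {a} Y = {}"
  shows "alg_mult X Y = {}"
  using assms
proof (induction X rule: finite_induct)
  case (insert x X)
  have a: "alg_mult {x} Y = {}" using insert.prems by simp
  have b: "alg_mult X Y = {}" using insert by simp
  show ?case using insert a b by (simp add: insert_alg_add[OF insert(2)] alg_mult_add_left)
qed simp

lemma alg_mult_comm:
  assumes "\<And>a b. a \<in> X \<Longrightarrow> b \<in> Y \<Longrightarrow> scomp a b = scomp b a"
  shows "alg_mult X Y = alg_mult Y X"
proof -
  have "card {(a, b). a \<in> X \<and> b \<in> Y \<and> scomp a b = h} = card {(a, b). a \<in> Y \<and> b \<in> X \<and> scomp a b = h}" for h
  proof -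
    let ?A = "{(a, b). a \<in> X \<and> b \<in> Y \<and> scomp a b = h}"
    let ?B = "{(a, b). a \<in> Y \<and> b \<in> X \<and> scomp a b = h}"
    have "?B = prod.swap ` ?A"
    proof (intro set_eqI iffI)
      fix p assume "p \<in> ?B"
      then obtain a b where p: "p = (a,b)" "a \<in> Y" "b \<in> X" "scomp a b = h" by blast
      then have "(b,a) \<in> ?A" using assms[of b a] by simp
      then show "p \<in> prod.swap ` ?A" by (rule image_eqI[rotated]) (simp add: p)
    next
      fix p assume "p \<in> prod.swap ` ?A"
      then obtain a b where p: "p = (b,a)" "a \<in> X" "b \<in> Y" "scomp a b = h" by auto
      then show "p \<in> ?B" using assms[of a b] by simp
    qed
    moreover have "inj_on prod.swap A" for A :: "(mor \<times> mor) set" by (auto simp: inj_on_def)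
    ultimately show ?thesis by (simp add: card_image)
  qed
  then show ?thesis by (simp add: alg_mult_def)
qed

definition tot :: "qobj \<Rightarrow> mor \<Rightarrow> bool" where
  "tot V g \<longleftrightarrow> (\<forall>x\<in>qcarrier V. \<exists>y. (x, y) \<in> g)"

definition Tot :: "qobj \<Rightarrow> qobj \<Rightarrow> mor set" where
  "Tot V W = {g \<in> Hom V W. tot V g}"

lemma finite_qcarrier[simp]: "finite (qcarrier V)"
proof -
  have "qcarrier V \<subseteq> (\<lambda>A i. i \<in> A) ` Pow {..<fst V}"
  proof
    fix x assume "x \<in> qcarrier V"
    then have "{i. x i} \<in> Pow {..<fst V}" by (auto simp: qcarrier_def not_less[symmetric])
    moreover have "x = (\<lambda>i. i \<in> {i. x i})" by auto
    ultimately show "x \<in> (\<lambda>A i. i \<in> A) ` Pow {..<fst V}" by blast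
  qed
  then show ?thesis by (rule finite_subset) auto
qed

lemma finite_Hom[simp]: "finite (Hom V W)"
proof -
  have "Hom V W \<subseteq> Pow (qcarrier V \<times> qcarrier W)" by (auto simp: Hom_def)
  then show ?thesis by (rule finite_subset) auto
qed

lemma finite_Hom_elem: "g \<in> Hom V W \<Longrightarrow> finite g"
  by (rule finite_subset[of _ "qcarrier V \<times> qcarrier W"]) (auto simp: Hom_def)

lemma finite_subobjs[simp]: "finite (subobjs V)" "finite (proper_subobjs V)"
proof -
  have "subobjs V \<subseteq> Pow (qcarrier V)" by (auto simp: subobjs_def is_subspace_def)
  then show "finite (subobjs V)" by (rule finite_subset) auto
  then show "finite (proper_subobjs V)" by (rule finite_subset[rotated]) (auto simp: proper_subobjs_def)
qed

lemma Tot_sub: "Tot V W \<subseteq> Hom V W" by (auto simp: Tot_def)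

lemma finite_Tot[simp]: "finite (Tot V W)"
  using Tot_sub finite_Hom by (rule finite_subset)

lemma HomD:
  assumes "f \<in> Hom V W"
  shows "f \<subseteq> qcarrier V \<times> qcarrier W" "(vzero, vzero) \<in> f"
    "\<And>x y x' y'. (x, y) \<in> f \<Longrightarrow> (x', y') \<in> f \<Longrightarrow> (vadd x x', vadd y y') \<in> f"
    "\<And>x y y'. (x, y) \<in> f \<Longrightarrow> (x, y') \<in> f \<Longrightarrow> y = y'"
    "\<And>x x' y. (x, y) \<in> f \<Longrightarrow> (x', y) \<in> f \<Longrightarrow> x = x'"
    "\<And>x y. (x, y) \<in> f \<Longrightarrow> qf W y = qf V x"
  using assms unfolding Hom_def mem_Collect_eq by blast+

lemma HomI:
  assumes "f \<subseteq> qcarrier V \<times> qcarrier W" "(vzero, vzero) \<in> f"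
    "\<And>x y x' y'. (x, y) \<in> f \<Longrightarrow> (x', y') \<in> f \<Longrightarrow> (vadd x x', vadd y y') \<in> f"
    "\<And>x y y'. (x, y) \<in> f \<Longrightarrow> (x, y') \<in> f \<Longrightarrow> y = y'"
    "\<And>x x' y. (x, y) \<in> f \<Longrightarrow> (x', y) \<in> f \<Longrightarrow> x = x'"
    "\<And>x y. (x, y) \<in> f \<Longrightarrow> qf W y = qf V x"
  shows "f \<in> Hom V W"
  using assms unfolding Hom_def mem_Collect_eq by blast

lemma Hom_comp:
  assumes "f \<in> Hom W1 W2" "g \<in> Hom W2 W3"
  shows "scomp g f \<in> Hom W1 W3"
proof -
  note f = HomD[OF assms(1)] and g = HomD[OF assms(2)]
  show ?thesis unfolding scomp_def
  proof (rule HomI)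
    show "f O g \<subseteq> qcarrier W1 \<times> qcarrier W3" using f(1) g(1) by blast
    show "(vzero, vzero) \<in> f O g" using f(2) g(2) by blast
  next
    fix x y x' y' assume "(x, y) \<in> f O g" "(x', y') \<in> f O g"
    then obtain u u' where "(x, u) \<in> f" "(u, y) \<in> g" "(x', u') \<in> f" "(u', y') \<in> g" by blast
    then show "(vadd x x', vadd y y') \<in> f O g" using f(3) g(3) by blast
  next
    fix x y y' assume "(x, y) \<in> f O g" "(x, y') \<in> f O g"
    then obtain u u' where "(x, u) \<in> f" "(u, y) \<in> g" "(x, u') \<in> f" "(u', y') \<in> g" by blast
    then show "y = y'" using f(4) g(4) by metis
  next
    fix x x' y assume "(x, y) \<in> f O g" "(x', y) \<in> f O g"
    then obtain u u' where "(x, u) \<in> f" "(u, y) \<in> g" "(x', u') \<in> f" "(u', y) \<in> g" by blast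
    then show "x = x'" using f(5) g(5) by metis
  next
    fix x y assume "(x, y) \<in> f O g"
    then obtain u where "(x, u) \<in> f" "(u, y) \<in> g" by blast
    then show "qf W3 y = qf W1 x" using f(6) g(6) by metis
  qed
qed

lemma carrier_subobj: "qcarrier V \<in> subobjs V"
  by (auto simp: subobjs_def is_subspace_def qcarrier_def vzero_def vadd_def)

lemma Id_Hom: "S \<in> subobjs V \<Longrightarrow> Id_on S \<in> Hom V V"
  by (auto simp: Hom_def subobjs_def is_subspace_def)

lemma idm_Hom: "idm V \<in> Hom V V"
  using Id_Hom[OF carrier_subobj] by (simp add: idm_def)

lemma Id_comp: "scomp (Id_on S) (Id_on T) = Id_on (S \<inter> T)"
  by (auto simp: scomp_def)

lemma subobj_int: "S \<in> subobjs V \<Longrightarrow> T \<in> subobjs V \<Longrightarrow> S \<inter> T \<in> subobjs V"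
  by (auto simp: subobjs_def is_subspace_def)

lemma subobj_sub: "S \<in> subobjs V \<Longrightarrow> S \<subseteq> qcarrier V"
  by (auto simp: subobjs_def is_subspace_def)

lemma Hom_right_idm: "g \<in> Hom V W \<Longrightarrow> scomp g (idm V) = g"
  by (auto simp: Hom_def scomp_def idm_def)

lemma Hom_left_idm: "g \<in> Hom V W \<Longrightarrow> scomp (idm W) g = g"
  by (auto simp: Hom_def scomp_def idm_def)

lemma restr_not_tot:
  assumes "S \<subseteq> qcarrier V" "S \<noteq> qcarrier V"
  shows "\<not> tot V (scomp g (Id_on S))"
  using assms by (auto simp: tot_def scomp_def)

lemma lemA:
  assumes "f \<in> Hom V W" "g \<in> Hom V W"
  shows "scomp (tr f) g = idm V \<longleftrightarrow> (f = g \<and> tot V g)"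
proof
  assume h: "scomp (tr f) g = idm V"
  have m: "(x, z) \<in> g O converse f \<longleftrightarrow> x \<in> qcarrier V \<and> z = x" for x z
    using h by (auto simp: scomp_def tr_def idm_def)
  have t: "tot V g" using m unfolding tot_def by blast
  have "f = g"
  proof (intro set_eqI iffI)
    fix p assume "p \<in> f"
    then obtain z y where p: "p = (z, y)" "(z, y) \<in> f" by (cases p) auto
    then have "z \<in> qcarrier V" using assms(1) by (auto simp: Hom_def)
    then obtain y' where "(z, y') \<in> g" "(z, y') \<in> f" using m[of z z] by auto
    then show "p \<in> g" using p assms(1) unfolding Hom_def by blast
  next
    fix p assume "p \<in> g"
    then obtain z y where p: "p = (z, y)" "(z, y) \<in> g" by (cases p) auto
    then have "z \<in> qcarrier V" using assms(2) by (auto simp: Hom_def)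
    then obtain y' where "(z, y') \<in> g" "(z, y') \<in> f" using m[of z z] by auto
    then show "p \<in> f" using p assms(2) unfolding Hom_def by blast
  qed
  then show "f = g \<and> tot V g" using t by simp
next
  assume fg: "f = g \<and> tot V g"
  note g = HomD[OF assms(2)]
  show "scomp (tr f) g = idm V"
    unfolding scomp_def tr_def idm_def
  proof (intro set_eqI iffI)
    fix p assume "p \<in> g O converse f"
    then obtain x z y where p: "p = (x, z)" "(x, y) \<in> g" "(z, y) \<in> g" using fg by blast
    then have "x = z" using g(5) by blast
    moreover have "x \<in> qcarrier V" using p g(1) by blast
    ultimately show "p \<in> Id_on (qcarrier V)" using p by blast
  next
    fix p assume "p \<in> Id_on (qcarrier V)"
    then obtain x where p: "p = (x, x)" "x \<in> qcarrier V" by blast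
    then obtain y where "(x, y) \<in> g" using fg unfolding tot_def by blast
    then show "p \<in> g O converse f" using p fg by blast
  qed
qed

lemma aV_eq: "x \<subseteq> Hom V W \<Longrightarrow> aV V W x = x \<inter> Tot V W"
proof -
  assume x: "x \<subseteq> Hom V W"
  have "{f \<in> x. scomp (tr f) g = idm V} = (if g \<in> x \<and> tot V g then {g} else {})" if "g \<in> Hom V W" for g
    using lemA[OF _ that] x by auto
  then have "odd (card {f \<in> x. scomp (tr f) g = idm V}) \<longleftrightarrow> g \<in> x \<and> tot V g" if "g \<in> Hom V W" for g
    using that by simp
  then show ?thesis unfolding aV_def Tot_def using x by auto
qed

lemma isoV_eq: "isoV V W = Pow (Tot V W)"
proof
  show "isoV V W \<subseteq> Pow (Tot V W)" unfolding isoV_def using aV_eq by auto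
  show "Pow (Tot V W) \<subseteq> isoV V W"
  proof
    fix S assume "S \<in> Pow (Tot V W)"
    then have S: "S \<subseteq> Tot V W" by simp
    then have h: "S \<subseteq> Hom V W" using Tot_sub by blast
    have a: "aV V W S = S" using aV_eq[OF h] S by blast
    show "S \<in> isoV V W" unfolding isoV_def using h a by (intro image_eqI[where x=S]) auto
  qed
qed

lemma domain_lemma:
  assumes "g \<in> Hom V W" "\<not> tot V g"
  shows "Domain g \<in> proper_subobjs V" "scomp g (Id_on (Domain g)) = g"
proof -
  show "scomp g (Id_on (Domain g)) = g" by (auto simp: scomp_def)
  have "Domain g \<subseteq> qcarrier V" using assms(1) by (auto simp: Hom_def)
  moreover have "Domain g \<noteq> qcarrier V" using assms(2) by (auto simp: tot_def)
  moreover have "vzero \<in> Domain g" using assms(1) by (auto simp: Hom_def)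
  moreover have "\<forall>x\<in>Domain g. \<forall>y\<in>Domain g. vadd x y \<in> Domain g"
  proof (intro ballI)
    fix x y assume "x \<in> Domain g" "y \<in> Domain g"
    then obtain x' y' where "(x, x') \<in> g" "(y, y') \<in> g" by blast
    then have "(vadd x y, vadd x' y') \<in> g" using HomD(3)[OF assms(1)] by blast
    then show "vadd x y \<in> Domain g" by blast
  qed
  ultimately show "Domain g \<in> proper_subobjs V"
    by (auto simp: proper_subobjs_def subobjs_def is_subspace_def)
qed

lemma lemC:
  assumes "h \<in> Hom W W'" "k \<in> Hom V W'" "tot V (scomp (tr h) k)"
  shows "scomp h (scomp (tr h) k) = k" "tot V k"
proof -
  show "tot V k" using assms(3) by (auto simp: tot_def scomp_def tr_def)
  show "scomp h (scomp (tr h) k) = k"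
  proof (intro set_eqI iffI)
    fix p assume "p \<in> scomp h (scomp (tr h) k)"
    then obtain x z w z' where p: "p = (x, z)" "(x, z') \<in> k" "(w, z') \<in> h" "(w, z) \<in> h"
      by (auto simp: scomp_def tr_def)
    then show "p \<in> k" using assms(1) unfolding Hom_def by blast
  next
    fix p assume pk: "p \<in> k"
    then obtain x z where p: "p = (x, z)" by (cases p)
    then have "x \<in> qcarrier V" using pk assms(2) by (auto simp: Hom_def)
    then obtain w where "(x, w) \<in> scomp (tr h) k" using assms(3) by (auto simp: tot_def)
    then obtain z' where "(x, z') \<in> k" "(w, z') \<in> h" by (auto simp: scomp_def tr_def)
    moreover have "z' = z" using calculation(1) pk p assms(2) unfolding Hom_def by blast
    ultimately show "p \<in> scomp h (scomp (tr h) k)" using p pk by (auto simp: scomp_def tr_def)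
  qed
qed

lemma lemB:
  assumes "h \<in> Hom W W'" "g \<in> Hom V W" "tot V (scomp h g)"
  shows "scomp (tr h) (scomp h g) = g" "tot V g"
proof -
  show "tot V g" using assms(3) by (auto simp: tot_def scomp_def)
  show "scomp (tr h) (scomp h g) = g"
  proof (intro set_eqI iffI)
    fix p assume "p \<in> scomp (tr h) (scomp h g)"
    then obtain x w w' z where p: "p = (x, w')" "(x, w) \<in> g" "(w, z) \<in> h" "(w', z) \<in> h"
      by (auto simp: scomp_def tr_def)
    then show "p \<in> g" using assms(1) unfolding Hom_def by blast
  next
    fix p assume pg: "p \<in> g"
    then obtain x w where p: "p = (x, w)" by (cases p)
    then have "x \<in> qcarrier V" using pg assms(2) by (auto simp: Hom_def)
    then obtain z where "(x, z) \<in> scomp h g" using assms(3) by (auto simp: tot_def)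
    then obtain w' where "(x, w') \<in> g" "(w', z) \<in> h" by (auto simp: scomp_def)
    moreover have "w' = w" using calculation(1) pg p assms(2) unfolding Hom_def by blast
    ultimately show "p \<in> scomp (tr h) (scomp h g)" using p pg by (auto simp: scomp_def tr_def)
  qed
qed

definition HH :: "qobj \<Rightarrow> mor set" where
  "HH V = Id_on ` subobjs V"

definition ff :: "qobj \<Rightarrow> vec set \<Rightarrow> mor set \<Rightarrow> mor set" where
  "ff V U acc = alg_mult (alg_add {idm V} {e_sub U}) acc"

definition ff' :: "qobj \<Rightarrow> vec set \<Rightarrow> mor set \<Rightarrow> mor set" where
  "ff' V U acc = ff V U (acc \<inter> HH V)"

lemma finite_HH[simp]: "finite (HH V)" by (simp add: HH_def)

lemma idm_HH: "idm V \<in> HH V"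
  using carrier_subobj by (auto simp: HH_def idm_def)

lemma Id_on_inj: "Id_on A = Id_on B \<Longrightarrow> A = B"
  by (metis Domain_Id_on)

lemma proper_sub: "U \<in> proper_subobjs V \<Longrightarrow> U \<in> subobjs V" "U \<in> proper_subobjs V \<Longrightarrow> U \<noteq> qcarrier V"
  by (auto simp: proper_subobjs_def)

lemma mult_HH:
  assumes "X \<subseteq> HH V" "Y \<subseteq> HH V"
  shows "alg_mult X Y \<subseteq> HH V"
proof
  fix h assume "h \<in> alg_mult X Y"
  then obtain a b where "a \<in> X" "b \<in> Y" "h = scomp a b" using alg_mult_subset by blast
  moreover obtain S where "S \<in> subobjs V" "a = Id_on S" using assms(1) calculation(1) unfolding HH_def by blast
  moreover obtain T where "T \<in> subobjs V" "b = Id_on T" using assms(2) calculation(2) unfolding HH_def by blast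
  ultimately show "h \<in> HH V" using subobj_int by (auto simp: HH_def Id_comp)
qed

lemma A_HH: "U \<in> subobjs V \<Longrightarrow> alg_add {idm V} {e_sub U} \<subseteq> HH V"
proof -
  assume "U \<in> subobjs V"
  then have "e_sub U \<in> HH V" by (simp add: HH_def e_sub_def)
  then show ?thesis using idm_HH[of V] by (auto simp: alg_add_def)
qed

lemma ff_HH: "U \<in> subobjs V \<Longrightarrow> acc \<subseteq> HH V \<Longrightarrow> ff V U acc \<subseteq> HH V"
  unfolding ff_def by (rule mult_HH[OF A_HH]) auto

lemma ff'_HH: "U \<in> subobjs V \<Longrightarrow> ff' V U acc \<subseteq> HH V"
  unfolding ff'_def by (rule ff_HH) auto

lemma E_fold': "E_elem V = Finite_Set.fold (ff' V) {idm V} (proper_subobjs V)"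
  unfolding E_elem_def
proof (rule fold_closed_eq[where B = "Pow (HH V)"])
  fix a b assume "a \<in> proper_subobjs V" "b \<in> Pow (HH V)"
  then show "alg_mult (alg_add {idm V} {e_sub a}) b = ff' V a b"
    by (auto simp: ff'_def ff_def Int_absorb2)
next
  fix a b assume "a \<in> proper_subobjs V" "b \<in> Pow (HH V)"
  then show "ff' V a b \<in> Pow (HH V)" using ff'_HH proper_sub by blast
next
  show "{idm V} \<in> Pow (HH V)" using idm_HH by auto
qed

lemma HH_comm: "a \<in> HH V \<Longrightarrow> b \<in> HH V \<Longrightarrow> scomp a b = scomp b a"
  by (auto simp: HH_def Id_comp Int_commute)

lemma cfc: "comp_fun_commute_on (proper_subobjs V) (ff' V)"
proof
  fix x y assume x: "x \<in> proper_subobjs V" and y: "y \<in> proper_subobjs V"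
  show "ff' V y \<circ> ff' V x = ff' V x \<circ> ff' V y"
  proof
    fix acc
    let ?a = "acc \<inter> HH V"
    have fa: "finite ?a" by auto
    have "ff' V y (ff' V x acc) = ff V y (ff V x ?a)"
      using ff_HH[of x V ?a] proper_sub(1)[OF x] by (simp add: ff'_def Int_absorb2)
    also have "\<dots> = alg_mult (alg_mult (alg_add {idm V} {e_sub y}) (alg_add {idm V} {e_sub x})) ?a"
      unfolding ff_def by (rule alg_mult_assoc[symmetric]) (auto simp: fa)
    also have "alg_mult (alg_add {idm V} {e_sub y}) (alg_add {idm V} {e_sub x}) =
               alg_mult (alg_add {idm V} {e_sub x}) (alg_add {idm V} {e_sub y})"
      by (rule alg_mult_comm) (use A_HH[OF proper_sub(1)[OF x]] A_HH[OF proper_sub(1)[OF y]] HH_comm in blast)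
    also have "alg_mult \<dots> ?a = ff V x (ff V y ?a)"
      unfolding ff_def by (rule alg_mult_assoc) (auto simp: fa)
    also have "\<dots> = ff' V x (ff' V y acc)"
      using ff_HH[of y V ?a] proper_sub(1)[OF y] by (simp add: ff'_def Int_absorb2)
    finally show "(ff' V y \<circ> ff' V x) acc = (ff' V x \<circ> ff' V y) acc" by simp
  qed
qed

lemma idm_left_HH: "acc \<subseteq> HH V \<Longrightarrow> alg_mult {idm V} acc = acc"
proof (rule alg_mult_left_id)
  fix b assume "acc \<subseteq> HH V" "b \<in> acc"
  then obtain S where "S \<in> subobjs V" "b = Id_on S" unfolding HH_def by blast
  then show "scomp (idm V) b = b" using subobj_sub by (auto simp: idm_def Id_comp Int_absorb1)
qed

lemma fold_inv:
  assumes "A \<subseteq> proper_subobjs V"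
  shows "Finite_Set.fold (ff' V) {idm V} A \<subseteq> HH V \<and> idm V \<in> Finite_Set.fold (ff' V) {idm V} A"
proof -
  have fA: "finite A" using assms finite_subobjs(2) finite_subset by blast
  show ?thesis using fA assms
  proof (induction A rule: finite_induct)
    case empty
    then show ?case using idm_HH by simp
  next
    case (insert x A)
    interpret comp_fun_commute_on "proper_subobjs V" "ff' V" by (rule cfc)
    let ?acc = "Finite_Set.fold (ff' V) {idm V} A"
    have IH: "?acc \<subseteq> HH V" "idm V \<in> ?acc" using insert by auto
    have xP: "x \<in> proper_subobjs V" using insert by auto
    have eq: "Finite_Set.fold (ff' V) {idm V} (insert x A) = ff' V x ?acc"
      using insert by (intro fold_insert) auto
    have facc: "finite ?acc" using finite_subset[OF IH(1) finite_HH] .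
    have "ff' V x ?acc = ff V x ?acc" using IH by (simp add: ff'_def Int_absorb2)
    also have "\<dots> = alg_add (alg_mult {idm V} ?acc) (alg_mult {e_sub x} ?acc)"
      unfolding ff_def by (rule alg_mult_add_left) (auto simp: facc)
    also have "\<dots> = alg_add ?acc (alg_mult {e_sub x} ?acc)" using idm_left_HH[OF IH(1)] by simp
    finally have e2: "ff' V x ?acc = alg_add ?acc (alg_mult {e_sub x} ?acc)" .
    have "idm V \<notin> alg_mult {e_sub x} ?acc"
    proof
      assume "idm V \<in> alg_mult {e_sub x} ?acc"
      then obtain b where "b \<in> ?acc" "idm V = scomp (e_sub x) b" using alg_mult_subset by blast
      then obtain T where "idm V = Id_on (x \<inter> T)" using IH(1) by (auto simp: HH_def e_sub_def Id_comp)
      then have "qcarrier V = x \<inter> T" unfolding idm_def by (rule Id_on_inj)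
      then show False using proper_sub[OF xP] subobj_sub[OF proper_sub(1)[OF xP]] by blast
    qed
    then have "idm V \<in> ff' V x ?acc" using e2 IH(2) by (simp add: alg_add_mem)
    moreover have "ff' V x ?acc \<subseteq> HH V" using ff'_HH proper_sub(1)[OF xP] by blast
    ultimately show ?case using eq by simp
  qed
qed

lemma E_HH: "E_elem V \<subseteq> HH V"
  unfolding E_fold' using fold_inv[OF order_refl] by blast

lemma idm_E: "idm V \<in> E_elem V"
  unfolding E_fold' using fold_inv[OF order_refl] by blast

lemma finite_E[simp]: "finite (E_elem V)"
  using E_HH finite_HH finite_subset by blast

lemma e_E_zero:
  assumes U: "U \<in> proper_subobjs V"
  shows "alg_mult {e_sub U} (E_elem V) = {}"
proof -
  interpret comp_fun_commute_on "proper_subobjs V" "ff' V" by (rule cfc)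
  let ?acc = "Finite_Set.fold (ff' V) {idm V} (proper_subobjs V - {U}) \<inter> HH V"
  have "E_elem V = ff' V U (Finite_Set.fold (ff' V) {idm V} (proper_subobjs V - {U}))"
    unfolding E_fold' by (rule fold_rec) (use U in auto)
  then have E: "E_elem V = alg_mult (alg_add {idm V} {e_sub U}) ?acc"
    by (simp add: ff'_def ff_def)
  have fa: "finite ?acc" by auto
  have "alg_mult {e_sub U} (alg_add {idm V} {e_sub U}) = alg_add (alg_mult {e_sub U} {idm V}) (alg_mult {e_sub U} {e_sub U})"
    by (rule alg_mult_add_right) auto
  also have "\<dots> = {}"
    using subobj_sub[OF proper_sub(1)[OF U]]
    by (simp add: alg_mult_single e_sub_def idm_def Id_comp Int_absorb2)
  finally have z: "alg_mult {e_sub U} (alg_add {idm V} {e_sub U}) = {}" .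
  have "alg_mult {e_sub U} (E_elem V) = alg_mult (alg_mult {e_sub U} (alg_add {idm V} {e_sub U})) ?acc"
    unfolding E by (rule alg_mult_assoc[symmetric]) (auto simp: fa)
  then show ?thesis using z by simp
qed

lemma E_decomp: "E_elem V = alg_add {idm V} (E_elem V - {idm V})"
  using idm_E[of V] by (auto simp: alg_add_def)

lemma E_rest: "b \<in> E_elem V - {idm V} \<Longrightarrow> \<exists>S. b = Id_on S \<and> S \<in> proper_subobjs V"
proof -
  assume b: "b \<in> E_elem V - {idm V}"
  then obtain S where S: "S \<in> subobjs V" "b = Id_on S" using E_HH[of V] unfolding HH_def by blast
  then have "S \<noteq> qcarrier V" using b by (auto simp: idm_def)
  then show ?thesis using S by (auto simp: proper_subobjs_def)
qed

lemma E_idem: "alg_mult (E_elem V) (E_elem V) = E_elem V"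
proof -
  let ?R = "E_elem V - {idm V}"
  have "alg_mult (E_elem V) (E_elem V) = alg_mult (alg_add {idm V} ?R) (E_elem V)"
    using E_decomp by simp
  also have "\<dots> = alg_add (alg_mult {idm V} (E_elem V)) (alg_mult ?R (E_elem V))"
    by (rule alg_mult_add_left) auto
  also have "alg_mult {idm V} (E_elem V) = E_elem V" using idm_left_HH[OF E_HH] .
  also have "alg_mult ?R (E_elem V) = {}"
  proof (rule alg_mult_zero_left)
    fix a assume "a \<in> ?R"
    then obtain S where "a = Id_on S" "S \<in> proper_subobjs V" using E_rest by blast
    then show "alg_mult {a} (E_elem V) = {}" using e_E_zero by (simp add: e_sub_def)
  qed auto
  finally show ?thesis by simp
qed

lemma nontot_E_zero:
  assumes "g \<in> Hom V W" "\<not> tot V g"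
  shows "alg_mult {g} (E_elem V) = {}"
proof -
  let ?D = "Domain g"
  have "alg_mult {g} (E_elem V) = alg_mult (alg_mult {g} {Id_on ?D}) (E_elem V)"
    using domain_lemma[OF assms] by (simp add: alg_mult_single)
  also have "\<dots> = alg_mult {g} (alg_mult {Id_on ?D} (E_elem V))"
    by (rule alg_mult_assoc) auto
  also have "alg_mult {Id_on ?D} (E_elem V) = {}"
    using e_E_zero[OF domain_lemma(1)[OF assms]] by (simp add: e_sub_def)
  finally show ?thesis by simp
qed

lemma zE_Hom:
  assumes "z \<subseteq> Hom V W"
  shows "alg_mult z (E_elem V) \<subseteq> Hom V W"
proof
  fix h assume "h \<in> alg_mult z (E_elem V)"
  then obtain a b where "a \<in> z" "b \<in> E_elem V" "h = scomp a b" using alg_mult_subset by blast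
  moreover then have "b \<in> Hom V V" using E_HH[of V] Id_Hom[of _ V] unfolding HH_def by blast
  ultimately show "h \<in> Hom V W" using assms Hom_comp by blast
qed

lemma zE_Tot:
  assumes "z \<subseteq> Hom V W"
  shows "alg_mult z (E_elem V) \<inter> Tot V W = z \<inter> Tot V W"
proof -
  let ?R = "E_elem V - {idm V}"
  have fz: "finite z" using assms finite_Hom finite_subset by blast
  have "alg_mult z (E_elem V) = alg_mult z (alg_add {idm V} ?R)" using E_decomp by simp
  also have "\<dots> = alg_add (alg_mult z {idm V}) (alg_mult z ?R)"
    by (rule alg_mult_add_right) (auto simp: fz)
  also have "alg_mult z {idm V} = z"
    by (rule alg_mult_right_id) (use assms Hom_right_idm in blast)
  finally have e: "alg_mult z (E_elem V) = alg_add z (alg_mult z ?R)" .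
  have "alg_mult z ?R \<inter> Tot V W = {}"
  proof (rule ccontr)
    assume "alg_mult z ?R \<inter> Tot V W \<noteq> {}"
    then obtain h where h1: "h \<in> alg_mult z ?R" and h2: "h \<in> Tot V W" by blast
    obtain a b where ab: "a \<in> z" "b \<in> ?R" "h = scomp a b"
      using alg_mult_subset[of z ?R] h1 by blast
    have t: "tot V h" using h2 by (simp add: Tot_def)
    obtain S where S: "b = Id_on S" "S \<in> proper_subobjs V" using E_rest[OF ab(2)] by blast
    show False
      using restr_not_tot[of S V a] proper_sub[OF S(2)] subobj_sub[OF proper_sub(1)[OF S(2)]] t ab(3) S(1) by blast
  qed
  then show ?thesis unfolding e by (auto simp: alg_add_def)
qed

lemma aV_zE: "z \<subseteq> Hom V W \<Longrightarrow> aV V W (alg_mult z (E_elem V)) = z \<inter> Tot V W"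
  using aV_eq[OF zE_Hom] zE_Tot by simp

lemma zE_red:
  assumes "z \<subseteq> Hom V W"
  shows "alg_mult z (E_elem V) = alg_mult (z \<inter> Tot V W) (E_elem V)"
proof -
  have fz: "finite z" using assms finite_Hom finite_subset by blast
  have "z = alg_add (z \<inter> Tot V W) (z - Tot V W)" by (auto simp: alg_add_def)
  then have "alg_mult z (E_elem V) = alg_add (alg_mult (z \<inter> Tot V W) (E_elem V)) (alg_mult (z - Tot V W) (E_elem V))"
    by (metis alg_mult_add_left finite_Diff finite_Int fz finite_E)
  also have "alg_mult (z - Tot V W) (E_elem V) = {}"
  proof (rule alg_mult_zero_left)
    fix a assume "a \<in> z - Tot V W"
    then have "a \<in> Hom V W" "\<not> tot V a" using assms by (auto simp: Tot_def)
    then show "alg_mult {a} (E_elem V) = {}" by (rule nontot_E_zero)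
  qed (auto simp: fz)
  finally show ?thesis by simp
qed

lemma QE_mem: "x \<in> QE V E W \<longleftrightarrow> (\<exists>z. z \<subseteq> Hom V W \<and> x = alg_mult z E)"
  by (auto simp: QE_def)

lemma part2_bij: "bij_betw (aV V W) (QE V (E_elem V) W) (isoV V W)"
proof (rule bij_betw_imageI)
  show "inj_on (aV V W) (QE V (E_elem V) W)"
  proof (rule inj_onI)
    fix x y assume "x \<in> QE V (E_elem V) W" "y \<in> QE V (E_elem V) W" and eq: "aV V W x = aV V W y"
    then obtain z1 z2 where z: "z1 \<subseteq> Hom V W" "x = alg_mult z1 (E_elem V)"
      "z2 \<subseteq> Hom V W" "y = alg_mult z2 (E_elem V)" by (auto simp: QE_mem)
    then have "z1 \<inter> Tot V W = z2 \<inter> Tot V W" using eq aV_zE by metis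
    then show "x = y" using z zE_red by metis
  qed
  show "aV V W ` QE V (E_elem V) W = isoV V W"
  proof
    show "aV V W ` QE V (E_elem V) W \<subseteq> isoV V W"
      using aV_zE[of _ V W] by (auto simp: QE_mem isoV_eq)
    show "isoV V W \<subseteq> aV V W ` QE V (E_elem V) W"
    proof
      fix S assume "S \<in> isoV V W"
      then have S: "S \<subseteq> Tot V W" by (simp add: isoV_eq)
      then have h: "S \<subseteq> Hom V W" using Tot_sub by blast
      then have "alg_mult S (E_elem V) \<in> QE V (E_elem V) W" by (auto simp: QE_mem)
      moreover have "aV V W (alg_mult S (E_elem V)) = S" using aV_zE[OF h] S by blast
      ultimately show "S \<in> aV V W ` QE V (E_elem V) W" by (metis image_eqI)
    qed
  qed
qed

lemma part2_add:
  assumes "x \<in> QE V (E_elem V) W" "y \<in> QE V (E_elem V) W"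
  shows "aV V W (alg_add x y) = alg_add (aV V W x) (aV V W y)"
proof -
  obtain z1 z2 where z: "z1 \<subseteq> Hom V W" "x = alg_mult z1 (E_elem V)"
      "z2 \<subseteq> Hom V W" "y = alg_mult z2 (E_elem V)" using assms by (auto simp: QE_mem)
  have f: "finite z1" "finite z2" using z finite_Hom finite_subset by metis+
  have "alg_add x y = alg_mult (alg_add z1 z2) (E_elem V)"
    using z f by (simp add: alg_mult_add_left)
  moreover have "alg_add z1 z2 \<subseteq> Hom V W" using z by (auto simp: alg_add_def)
  ultimately have "aV V W (alg_add x y) = alg_add z1 z2 \<inter> Tot V W" using aV_zE by simp
  also have "\<dots> = alg_add (z1 \<inter> Tot V W) (z2 \<inter> Tot V W)" by (auto simp: alg_add_def)
  finally show ?thesis using z aV_zE by simp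
qed

lemma part2_nat:
  assumes h: "h \<in> Hom W W'" and x: "x \<in> QE V (E_elem V) W"
  shows "aV V W' (Qmap h x) = DQmap V W' h (aV V W x)"
proof -
  obtain y where y: "y \<subseteq> Hom V W" "x = alg_mult y (E_elem V)" using x by (auto simp: QE_mem)
  have fy: "finite y" using y finite_Hom finite_subset by metis
  let ?M = "alg_mult {h} y"
  have Q: "Qmap h x = alg_mult ?M (E_elem V)"
    unfolding Qmap_def y(2) by (rule alg_mult_assoc[symmetric]) (auto simp: fy)
  have MH: "?M \<subseteq> Hom V W'"
  proof
    fix k assume k: "k \<in> ?M"
    obtain a b where "a \<in> {h}" "b \<in> y" "k = scomp a b" using alg_mult_subset[of "{h}" y] k by blast
    then have "b \<in> Hom V W" "k = scomp h b" using y by auto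
    then show "k \<in> Hom V W'" using Hom_comp[OF _ h] by simp
  qed
  have L: "aV V W' (Qmap h x) = ?M \<inter> Tot V W'" using Q aV_zE[OF MH] by simp
  have R: "aV V W x = y \<inter> Tot V W" using y aV_zE by simp
  have "?M \<inter> Tot V W' = DQmap V W' h (y \<inter> Tot V W)"
  proof (intro set_eqI iffI)
    fix k assume k: "k \<in> ?M \<inter> Tot V W'"
    obtain a b where "a \<in> {h}" "b \<in> y" "k = scomp a b" using alg_mult_subset[of "{h}" y] k by blast
    then have b: "b \<in> y" "k = scomp h b" by auto
    have bH: "b \<in> Hom V W" using b y by blast
    have kt: "tot V k" "k \<in> Hom V W'" using k by (auto simp: Tot_def)
    have "scomp (tr h) k = b" "tot V b" using lemB[OF h bH] kt b by auto
    then show "k \<in> DQmap V W' h (y \<inter> Tot V W)" using kt b bH by (auto simp: DQmap_def Tot_def)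
  next
    fix k assume "k \<in> DQmap V W' h (y \<inter> Tot V W)"
    then have k: "k \<in> Hom V W'" "scomp (tr h) k \<in> y" "scomp (tr h) k \<in> Tot V W"
      by (auto simp: DQmap_def)
    let ?b = "scomp (tr h) k"
    have tb: "tot V ?b" using k by (simp add: Tot_def)
    have c: "scomp h ?b = k" "tot V k" using lemC[OF h k(1) tb] by auto
    have "{b' \<in> y. scomp h b' = k} = {?b}"
    proof (intro set_eqI iffI)
      fix b' assume "b' \<in> {b' \<in> y. scomp h b' = k}"
      then have b': "b' \<in> y" "scomp h b' = k" by auto
      have bH: "b' \<in> Hom V W" using y b' by blast
      have "tot V (scomp h b')" using b'(2) c(2) by simp
      then have "scomp (tr h) (scomp h b') = b'" by (rule lemB(1)[OF h bH])
      then show "b' \<in> {?b}" using b' by simp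
    qed (use k c in auto)
    then have "k \<in> ?M" by (simp add: alg_mult_left_single)
    then show "k \<in> ?M \<inter> Tot V W'" using c k by (simp add: Tot_def)
  qed
  then show ?thesis using L R by simp
qed

lemma sum_in_F2:
  assumes "is_F2space S" "\<And>x. x \<in> A \<Longrightarrow> G x \<in> S"
  shows "sum G A \<in> S"
  using assms(2)
proof (induction A rule: infinite_finite_induct)
  case (infinite A) then show ?case using assms(1) by (simp add: is_F2space_def)
next
  case empty then show ?case using assms(1) by (simp add: is_F2space_def)
next
  case (insert x F) then show ?case using assms(1) by (simp add: is_F2space_def)
qed

lemma F2_double: "is_F2space S \<Longrightarrow> x \<in> S \<Longrightarrow> x + x = 0"
  by (simp add: is_F2space_def)

lemma sum_symdiff_F2:
  assumes S: "is_F2space S" and fin: "finite A" "finite B" and G: "\<And>x. x \<in> A \<union> B \<Longrightarrow> G x \<in> S"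
  shows "sum G ((A - B) \<union> (B - A)) = sum G A + sum G B"
proof -
  have a: "sum G A = sum G (A \<inter> B) + sum G (A - B)" using fin(1) by (rule sum.Int_Diff)
  have b: "sum G B = sum G (A \<inter> B) + sum G (B - A)" using sum.Int_Diff[OF fin(2), of G A] by (simp add: Int_commute)
  have u: "sum G ((A - B) \<union> (B - A)) = sum G (A - B) + sum G (B - A)"
    using fin by (intro sum.union_disjoint) auto
  have c: "sum G (A \<inter> B) + sum G (A \<inter> B) = 0"
    by (rule F2_double[OF S]) (rule sum_in_F2[OF S], use G in auto)
  have "sum G A + sum G B = (sum G (A - B) + sum G (B - A)) + (sum G (A \<inter> B) + sum G (A \<inter> B))"
    unfolding a b by (simp add: algebra_simps)
  then show ?thesis using u c by simp
qed

lemma sum_mod2: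
  assumes S: "is_F2space S" and fin: "finite X" and G: "\<And>e. e \<in> X \<Longrightarrow> G (f e) \<in> S"
  shows "(\<Sum>e\<in>X. G (f e)) = sum G {h. odd (card {e \<in> X. f e = h})}"
  using fin G
proof (induction X rule: finite_induct)
  case empty then show ?case by simp
next
  case (insert x X)
  let ?M = "\<lambda>X. {h. odd (card {e \<in> X. f e = h})}"
  have MX: "?M X \<subseteq> f ` X"
  proof
    fix h assume "h \<in> ?M X"
    then have "{e \<in> X. f e = h} \<noteq> {}" by (metis (no_types, lifting) card.empty even_zero mem_Collect_eq)
    then show "h \<in> f ` X" by blast
  qed
  have fM: "finite (?M X)" using MX insert(1) finite_subset by blast
  have cnt: "card {e \<in> insert x X. f e = h} = (if f x = h then Suc (card {e \<in> X. f e = h}) else card {e \<in> X. f e = h})" for h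
  proof (cases "f x = h")
    case True
    then have "{e \<in> insert x X. f e = h} = insert x {e \<in> X. f e = h}" by auto
    then show ?thesis using True insert(1,2) by simp
  next
    case False
    then have "{e \<in> insert x X. f e = h} = {e \<in> X. f e = h}" by auto
    then show ?thesis using False by simp
  qed
  have Mi: "?M (insert x X) = (?M X - {f x}) \<union> ({f x} - ?M X)"
    using cnt by auto
  have "sum G (?M (insert x X)) = sum G (?M X) + sum G {f x}"
    unfolding Mi by (rule sum_symdiff_F2[OF S fM]) (use MX insert(4) in auto)
  moreover have "(\<Sum>e\<in>insert x X. G (f e)) = G (f x) + (\<Sum>e\<in>X. G (f e))"
    using insert(1,2) by simp
  ultimately show ?case using insert by (simp add: add.commute)
qed

lemma FD1: "is_functor Fob Fmor \<Longrightarrow> is_qobj W \<Longrightarrow> is_F2space (Fob W)"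
  unfolding is_functor_def by blast

lemma FD2: "is_functor Fob Fmor \<Longrightarrow> is_qobj W \<Longrightarrow> is_qobj W' \<Longrightarrow> h \<in> Hom W W' \<Longrightarrow> x \<in> Fob W \<Longrightarrow> Fmor W W' h x \<in> Fob W'"
  unfolding is_functor_def by blast

lemma FD3: "is_functor Fob Fmor \<Longrightarrow> is_qobj W \<Longrightarrow> is_qobj W' \<Longrightarrow> h \<in> Hom W W' \<Longrightarrow> x \<in> Fob W \<Longrightarrow> y \<in> Fob W \<Longrightarrow>
   Fmor W W' h (x + y) = Fmor W W' h x + Fmor W W' h y"
  unfolding is_functor_def by blast

lemma FD4: "is_functor Fob Fmor \<Longrightarrow> is_qobj W \<Longrightarrow> x \<in> Fob W \<Longrightarrow> Fmor W W (idm W) x = x"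
  unfolding is_functor_def by blast

lemma FD5: "is_functor Fob Fmor \<Longrightarrow> is_qobj W1 \<Longrightarrow> is_qobj W2 \<Longrightarrow> is_qobj W3 \<Longrightarrow> f \<in> Hom W1 W2 \<Longrightarrow> g \<in> Hom W2 W3 \<Longrightarrow>
   x \<in> Fob W1 \<Longrightarrow> Fmor W1 W3 (scomp g f) x = Fmor W2 W3 g (Fmor W1 W2 f x)"
  unfolding is_functor_def by blast

lemma F_zero:
  assumes F: "is_functor Fob Fmor" and q: "is_qobj W" "is_qobj W'" and h: "h \<in> Hom W W'"
  shows "Fmor W W' h 0 = 0"
proof -
  have z: "0 \<in> Fob W" using FD1[OF F q(1)] by (simp add: is_F2space_def)
  have "Fmor W W' h 0 = Fmor W W' h (0 + 0)" by simp
  also have "\<dots> = Fmor W W' h 0 + Fmor W W' h 0" using FD3[OF F q h z z] .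
  also have "\<dots> = 0" using F2_double[OF FD1[OF F q(2)] FD2[OF F q h z]] .
  finally show ?thesis .
qed

lemma F_sum:
  assumes F: "is_functor Fob Fmor" and q: "is_qobj W" "is_qobj W'" and h: "h \<in> Hom W W'"
    and fin: "finite X" and G: "\<And>e. e \<in> X \<Longrightarrow> G e \<in> Fob W"
  shows "Fmor W W' h (sum G X) = (\<Sum>e\<in>X. Fmor W W' h (G e))"
  using fin G
proof (induction X rule: finite_induct)
  case empty then show ?case using F_zero[OF F q h] by simp
next
  case (insert x X)
  have s: "sum G X \<in> Fob W" using sum_in_F2[OF FD1[OF F q(1)]] insert by blast
  have "Fmor W W' h (sum G (insert x X)) = Fmor W W' h (G x + sum G X)" using insert by simp
  also have "\<dots> = Fmor W W' h (G x) + Fmor W W' h (sum G X)" using FD3[OF F q h _ s] insert by simp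
  finally show ?case using insert by simp
qed

lemma E_Hom: "e \<in> E_elem V \<Longrightarrow> e \<in> Hom V V"
  using E_HH[of V] Id_Hom[of _ V] unfolding HH_def by blast

lemma keyK:
  assumes F: "is_functor Fob Fmor" and qV: "is_qobj V" and qW: "is_qobj W'"
    and u: "u \<in> Fob V" and k: "k \<in> Hom V W'" and nt: "\<not> tot V k"
  shows "Fmor V W' k (Falg Fmor V (E_elem V) u) = 0"
proof -
  have Fu: "Fmor V V e u \<in> Fob V" if "e \<in> E_elem V" for e
    using FD2[OF F qV qV E_Hom[OF that] u] .
  have "Fmor V W' k (Falg Fmor V (E_elem V) u) = (\<Sum>e\<in>E_elem V. Fmor V W' k (Fmor V V e u))"
    unfolding Falg_def by (rule F_sum[OF F qV qW k finite_E Fu])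
  also have "\<dots> = (\<Sum>e\<in>E_elem V. Fmor V W' (scomp k e) u)"
    by (rule sum.cong) (simp_all add: FD5[OF F qV qV qW E_Hom k u])
  also have "\<dots> = sum (\<lambda>h. Fmor V W' h u) {h. odd (card {e \<in> E_elem V. scomp k e = h})}"
    by (rule sum_mod2[OF FD1[OF F qW] finite_E]) (use FD2[OF F qV qW _ u] Hom_comp[OF E_Hom k] in blast)
  also have "{h. odd (card {e \<in> E_elem V. scomp k e = h})} = {}"
    using nontot_E_zero[OF k nt] by (simp add: alg_mult_left_single)
  finally show ?thesis by simp
qed

lemma NT:
  assumes "\<tau> \<in> nat_trans_iso V Fob Fmor"
  shows "\<And>W S. \<not> is_qobj W \<Longrightarrow> \<tau> W S = 0"
    "\<And>W S. is_qobj W \<Longrightarrow> S \<in> isoV V W \<Longrightarrow> \<tau> W S \<in> Fob W"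
    "\<And>W S. is_qobj W \<Longrightarrow> S \<notin> isoV V W \<Longrightarrow> \<tau> W S = 0"
    "\<And>W S T. is_qobj W \<Longrightarrow> S \<in> isoV V W \<Longrightarrow> T \<in> isoV V W \<Longrightarrow> \<tau> W (alg_add S T) = \<tau> W S + \<tau> W T"
    "\<And>W W' h S. is_qobj W \<Longrightarrow> is_qobj W' \<Longrightarrow> h \<in> Hom W W' \<Longrightarrow> S \<in> isoV V W \<Longrightarrow>
        \<tau> W' (DQmap V W' h S) = Fmor W W' h (\<tau> W S)"
  using assms unfolding nat_trans_iso_def mem_Collect_eq by blast+

lemma idm_Tot: "idm V \<in> Tot V V"
  using idm_Hom by (auto simp: Tot_def tot_def idm_def)

lemma DQ_idm:
  assumes "g \<in> Tot V W"
  shows "DQmap V W g {idm V} = {g}"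
proof -
  have gH: "g \<in> Hom V W" and gt: "tot V g" using assms by (auto simp: Tot_def)
  have "scomp (tr g) g' = idm V \<longleftrightarrow> g' = g" if "g' \<in> Hom V W" for g'
    using lemA[OF gH that] gt by auto
  then show ?thesis using gH by (auto simp: DQmap_def)
qed

lemma N_empty:
  assumes F: "is_functor Fob Fmor" and t: "\<tau> \<in> nat_trans_iso V Fob Fmor" and q: "is_qobj W"
  shows "\<tau> W {} = 0"
proof -
  have e: "{} \<in> isoV V W" by (simp add: isoV_eq)
  have "\<tau> W {} = \<tau> W (alg_add {} {})" by simp
  also have "\<dots> = \<tau> W {} + \<tau> W {}" using NT(4)[OF t q e e] .
  also have "\<dots> = 0" using F2_double[OF FD1[OF F q] NT(2)[OF t q e]] .
  finally show ?thesis .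
qed

lemma N_formula:
  assumes F: "is_functor Fob Fmor" and t: "\<tau> \<in> nat_trans_iso V Fob Fmor"
    and qV: "is_qobj V" and q: "is_qobj W" and S: "S \<subseteq> Tot V W"
  shows "\<tau> W S = (\<Sum>g\<in>S. Fmor V W g (\<tau> V {idm V}))"
proof -
  have fS: "finite S" using S finite_Tot finite_subset by blast
  show ?thesis using fS S
  proof (induction S rule: finite_induct)
    case empty then show ?case using N_empty[OF F t q] by simp
  next
    case (insert g S)
    have gT: "g \<in> Tot V W" using insert by auto
    have single: "\<tau> W {g} = Fmor V W g (\<tau> V {idm V})"
    proof -
      have "\<tau> W (DQmap V W g {idm V}) = Fmor V W g (\<tau> V {idm V})"
        by (rule NT(5)[OF t qV q]) (use gT idm_Tot in \<open>auto simp: Tot_def isoV_eq\<close>)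
      then show ?thesis using DQ_idm[OF gT] by simp
    qed
    have "\<tau> W (insert g S) = \<tau> W (alg_add {g} S)" using insert_alg_add[OF insert(2)] by simp
    also have "\<dots> = \<tau> W {g} + \<tau> W S"
      by (rule NT(4)[OF t q]) (use insert in \<open>auto simp: isoV_eq\<close>)
    finally show ?case using single insert by simp
  qed
qed

lemma Phi_range:
  assumes F: "is_functor Fob Fmor" and t: "\<tau> \<in> nat_trans_iso V Fob Fmor" and qV: "is_qobj V"
  shows "\<tau> V {idm V} \<in> Falg Fmor V (E_elem V) ` Fob V"
proof -
  let ?v = "\<tau> V {idm V}"
  have iI: "{idm V} \<in> isoV V V" using idm_Tot by (simp add: isoV_eq)
  have v: "?v \<in> Fob V" using NT(2)[OF t qV iI] .
  have z: "Fmor V V e ?v = 0" if eR: "e \<in> E_elem V - {idm V}" for e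
  proof -
    obtain S where S: "e = Id_on S" "S \<in> proper_subobjs V" using E_rest[OF eR] by blast
    have eH: "e \<in> Hom V V" using S Id_Hom proper_sub by blast
    have nt: "\<not> tot V e"
    proof
      assume "tot V e"
      then have "qcarrier V \<subseteq> S" using S(1) by (auto simp: tot_def)
      then show False using proper_sub[OF S(2)] subobj_sub[OF proper_sub(1)[OF S(2)]] by blast
    qed
    have "DQmap V V e {idm V} = {}"
      using lemA[OF eH] nt by (auto simp: DQmap_def)
    moreover have "\<tau> V (DQmap V V e {idm V}) = Fmor V V e ?v" by (rule NT(5)[OF t qV qV eH iI])
    ultimately show ?thesis using N_empty[OF F t qV] by simp
  qed
  have "Falg Fmor V (E_elem V) ?v = Fmor V V (idm V) ?v + (\<Sum>e\<in>E_elem V - {idm V}. Fmor V V e ?v)"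
    unfolding Falg_def by (rule sum.remove) (auto simp: idm_E)
  also have "\<dots> = ?v" using z FD4[OF F qV v] by simp
  finally show ?thesis using v by (metis image_eqI)
qed

definition tau0 :: "qobj \<Rightarrow> (qobj \<Rightarrow> qobj \<Rightarrow> mor \<Rightarrow> 'b::ab_group_add \<Rightarrow> 'b) \<Rightarrow> 'b \<Rightarrow> qobj \<Rightarrow> mor set \<Rightarrow> 'b" where
  "tau0 V Fmor w W S = (if is_qobj W \<and> S \<in> isoV V W then (\<Sum>g\<in>S. Fmor V W g w) else 0)"

lemma tau0_nat:
  assumes F: "is_functor Fob Fmor" and qV: "is_qobj V" and u: "u \<in> Fob V"
  defines "w \<equiv> Falg Fmor V (E_elem V) u"
  shows "tau0 V Fmor w \<in> nat_trans_iso V Fob Fmor" "tau0 V Fmor w V {idm V} = w"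
proof -
  have w: "w \<in> Fob V" unfolding w_def Falg_def
    by (rule sum_in_F2[OF FD1[OF F qV]]) (use FD2[OF F qV qV E_Hom u] in blast)
  have inW: "(\<Sum>g\<in>S. Fmor V W g w) \<in> Fob W" if "is_qobj W" "S \<subseteq> Tot V W" for W S
    by (rule sum_in_F2[OF FD1[OF F that(1)]]) (use FD2[OF F qV that(1) _ w] that(2) Tot_sub in blast)
  have K: "Fmor V W' k w = 0" if "is_qobj W'" "k \<in> Hom V W'" "\<not> tot V k" for W' k
    unfolding w_def by (rule keyK[OF F qV that(1) u that(2,3)])
  show "tau0 V Fmor w V {idm V} = w"
    using idm_Tot FD4[OF F qV w] qV by (simp add: tau0_def isoV_eq)
  show "tau0 V Fmor w \<in> nat_trans_iso V Fob Fmor"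
    unfolding nat_trans_iso_def mem_Collect_eq
  proof (intro conjI allI impI ballI)
    fix W S assume "\<not> is_qobj W" then show "tau0 V Fmor w W S = 0" by (simp add: tau0_def)
  next
    fix W S assume "is_qobj W" "S \<in> isoV V W"
    then show "tau0 V Fmor w W S \<in> Fob W" using inW by (simp add: tau0_def isoV_eq)
  next
    fix W S assume "is_qobj W" "S \<notin> isoV V W"
    then show "tau0 V Fmor w W S = 0" by (simp add: tau0_def)
  next
    fix W S T assume q: "is_qobj W" and S: "S \<in> isoV V W" and T: "T \<in> isoV V W"
    then have ST: "S \<subseteq> Tot V W" "T \<subseteq> Tot V W" "alg_add S T \<subseteq> Tot V W" by (auto simp: isoV_eq alg_add_def)
    have "(\<Sum>g\<in>alg_add S T. Fmor V W g w) = (\<Sum>g\<in>S. Fmor V W g w) + (\<Sum>g\<in>T. Fmor V W g w)"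
      unfolding alg_add_def
      by (rule sum_symdiff_F2[OF FD1[OF F q]])
         (use finite_subset[OF ST(1) finite_Tot] finite_subset[OF ST(2) finite_Tot] FD2[OF F qV q _ w] ST Tot_sub in blast)+
    then show "tau0 V Fmor w W (alg_add S T) = tau0 V Fmor w W S + tau0 V Fmor w W T"
      using q ST by (simp add: tau0_def isoV_eq)
  next
    fix W W' h S assume q: "is_qobj W" and q': "is_qobj W'" and h: "h \<in> Hom W W'" and S: "S \<in> isoV V W"
    have ST: "S \<subseteq> Tot V W" using S by (simp add: isoV_eq)
    have fS: "finite S" using finite_subset[OF ST finite_Tot] .
    let ?S1 = "{g \<in> S. tot V (scomp h g)}"
    let ?S2 = "{g \<in> S. \<not> tot V (scomp h g)}"
    have gH: "g \<in> Hom V W" if "g \<in> S" for g using that ST Tot_sub by blast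
    have DQ: "DQmap V W' h S = scomp h ` ?S1"
    proof (intro set_eqI iffI)
      fix k assume "k \<in> DQmap V W' h S"
      then have k: "k \<in> Hom V W'" "scomp (tr h) k \<in> S" by (auto simp: DQmap_def)
      have tb: "tot V (scomp (tr h) k)" using k ST by (auto simp: Tot_def)
      have c: "scomp h (scomp (tr h) k) = k" "tot V k" using lemC[OF h k(1) tb] by auto
      then show "k \<in> scomp h ` ?S1" using k by (metis (mono_tags, lifting) image_eqI mem_Collect_eq)
    next
      fix k assume "k \<in> scomp h ` ?S1"
      then obtain g where g: "g \<in> S" "tot V (scomp h g)" "k = scomp h g" by blast
      have "scomp (tr h) k = g" using lemB(1)[OF h gH[OF g(1)] g(2)] g(3) by simp
      moreover have "k \<in> Hom V W'" using g(3) Hom_comp[OF gH[OF g(1)] h] by simp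
      ultimately show "k \<in> DQmap V W' h S" using g by (simp add: DQmap_def)
    qed
    have inj: "inj_on (scomp h) ?S1"
    proof (rule inj_onI)
      fix g1 g2 assume "g1 \<in> ?S1" "g2 \<in> ?S1" "scomp h g1 = scomp h g2"
      then show "g1 = g2" using lemB(1)[OF h gH] by (metis (no_types, lifting) mem_Collect_eq)
    qed
    have DQT: "DQmap V W' h S \<subseteq> Tot V W'"
      unfolding DQ using Hom_comp[OF gH h] by (auto simp: Tot_def)
    have lhs: "tau0 V Fmor w W' (DQmap V W' h S) = (\<Sum>k\<in>scomp h ` ?S1. Fmor V W' k w)"
      using q' DQT DQ by (simp add: tau0_def isoV_eq)
    also have "\<dots> = (\<Sum>g\<in>?S1. Fmor V W' (scomp h g) w)"
      using inj by (simp add: sum.reindex)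
    finally have L: "tau0 V Fmor w W' (DQmap V W' h S) = (\<Sum>g\<in>?S1. Fmor V W' (scomp h g) w)" .
    have "Fmor W W' h (tau0 V Fmor w W S) = Fmor W W' h (\<Sum>g\<in>S. Fmor V W g w)"
      using q S by (simp add: tau0_def)
    also have "\<dots> = (\<Sum>g\<in>S. Fmor W W' h (Fmor V W g w))"
      by (rule F_sum[OF F q q' h fS]) (use FD2[OF F qV q gH w] in blast)
    also have "\<dots> = (\<Sum>g\<in>S. Fmor V W' (scomp h g) w)"
      by (rule sum.cong) (simp_all add: FD5[OF F qV q q' gH h w])
    also have "\<dots> = (\<Sum>g\<in>?S1. Fmor V W' (scomp h g) w) + (\<Sum>g\<in>?S2. Fmor V W' (scomp h g) w)"
    proof -
      have e: "S = ?S1 \<union> ?S2" by blast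
      have "(\<Sum>g\<in>?S1 \<union> ?S2. Fmor V W' (scomp h g) w) = (\<Sum>g\<in>?S1. Fmor V W' (scomp h g) w) + (\<Sum>g\<in>?S2. Fmor V W' (scomp h g) w)"
        by (rule sum.union_disjoint) (use fS in auto)
      then show ?thesis by (simp only: e[symmetric])
    qed
    also have "(\<Sum>g\<in>?S2. Fmor V W' (scomp h g) w) = 0"
      by (rule sum.neutral) (use K[OF q'] Hom_comp[OF gH h] in blast)
    finally show "tau0 V Fmor w W' (DQmap V W' h S) = Fmor W W' h (tau0 V Fmor w W S)"
      using L by simp
  qed
qed

lemma part3:
  assumes F: "is_functor Fob Fmor" and qV: "is_qobj V"
  shows "\<exists>\<Phi>. bij_betw \<Phi> (nat_trans_iso V Fob Fmor) (Falg Fmor V (E_elem V) ` Fob V) \<and>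
              (\<forall>\<tau>\<in>nat_trans_iso V Fob Fmor. \<forall>\<sigma>\<in>nat_trans_iso V Fob Fmor.
                 \<Phi> (\<lambda>W S. \<tau> W S + \<sigma> W S) = \<Phi> \<tau> + \<Phi> \<sigma>)"
proof (intro exI[of _ "\<lambda>\<tau>. \<tau> V {idm V}"] conjI ballI)
  fix \<tau> \<sigma> show "(\<lambda>W S. \<tau> W S + \<sigma> W S) V {idm V} = \<tau> V {idm V} + \<sigma> V {idm V}" by simp
next
  show "bij_betw (\<lambda>\<tau>. \<tau> V {idm V}) (nat_trans_iso V Fob Fmor) (Falg Fmor V (E_elem V) ` Fob V)"
  proof (rule bij_betw_imageI)
    show "inj_on (\<lambda>\<tau>. \<tau> V {idm V}) (nat_trans_iso V Fob Fmor)"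
    proof (rule inj_onI)
      fix \<tau> \<sigma> assume t: "\<tau> \<in> nat_trans_iso V Fob Fmor" and s: "\<sigma> \<in> nat_trans_iso V Fob Fmor"
        and eq: "\<tau> V {idm V} = \<sigma> V {idm V}"
      show "\<tau> = \<sigma>"
      proof (intro ext)
        fix W S
        show "\<tau> W S = \<sigma> W S"
        proof (cases "is_qobj W")
          case False then show ?thesis using NT(1)[OF t] NT(1)[OF s] by simp
        next
          case q: True
          show ?thesis
          proof (cases "S \<in> isoV V W")
            case False then show ?thesis using NT(3)[OF t q] NT(3)[OF s q] by simp
          next
            case True
            then have "S \<subseteq> Tot V W" by (simp add: isoV_eq)
            then show ?thesis using N_formula[OF F t qV q] N_formula[OF F s qV q] eq by simp
          qed
        qed
      qed
    qed
    show "(\<lambda>\<tau>. \<tau> V {idm V}) ` nat_trans_iso V Fob Fmor = Falg Fmor V (E_elem V) ` Fob V"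
    proof
      show "(\<lambda>\<tau>. \<tau> V {idm V}) ` nat_trans_iso V Fob Fmor \<subseteq> Falg Fmor V (E_elem V) ` Fob V"
        using Phi_range[OF F _ qV] by blast
      show "Falg Fmor V (E_elem V) ` Fob V \<subseteq> (\<lambda>\<tau>. \<tau> V {idm V}) ` nat_trans_iso V Fob Fmor"
      proof
        fix w assume "w \<in> Falg Fmor V (E_elem V) ` Fob V"
        then obtain u where u: "u \<in> Fob V" "w = Falg Fmor V (E_elem V) u" by blast
        show "w \<in> (\<lambda>\<tau>. \<tau> V {idm V}) ` nat_trans_iso V Fob Fmor"
          using tau0_nat[OF F qV u(1)] u(2) by (metis (no_types, lifting) image_eqI)
      qed
    qed
  qed
qed

theorem proposition4p32:
  fixes V :: qobj
  assumes "is_qobj V"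
  shows "alg_mult (E_elem V) (E_elem V) = E_elem V \<and>
    (\<exists>\<phi>. \<forall>W. is_qobj W \<longrightarrow>
           bij_betw (\<phi> W) (QE V (E_elem V) W) (isoV V W) \<and>
           (\<forall>x\<in>QE V (E_elem V) W. \<forall>y\<in>QE V (E_elem V) W.
              \<phi> W (alg_add x y) = alg_add (\<phi> W x) (\<phi> W y)) \<and>
           (\<forall>W' h. is_qobj W' \<longrightarrow> h \<in> Hom W W' \<longrightarrow>
              (\<forall>x\<in>QE V (E_elem V) W. \<phi> W' (Qmap h x) = DQmap V W' h (\<phi> W x)))) \<and>
    (\<forall>(Fob :: qobj \<Rightarrow> 'b::ab_group_add set) Fmor. is_functor Fob Fmor \<longrightarrow>
           (\<exists>\<Phi>. bij_betw \<Phi> (nat_trans_iso V Fob Fmor) (Falg Fmor V (E_elem V) ` Fob V) \<and>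
              (\<forall>\<tau>\<in>nat_trans_iso V Fob Fmor. \<forall>\<sigma>\<in>nat_trans_iso V Fob Fmor.
                 \<Phi> (\<lambda>W S. \<tau> W S + \<sigma> W S) = \<Phi> \<tau> + \<Phi> \<sigma>)))"
proof (intro conjI allI impI)
  show "alg_mult (E_elem V) (E_elem V) = E_elem V" by (rule E_idem)
  show "\<exists>\<phi>. \<forall>W. is_qobj W \<longrightarrow>
           bij_betw (\<phi> W) (QE V (E_elem V) W) (isoV V W) \<and>
           (\<forall>x\<in>QE V (E_elem V) W. \<forall>y\<in>QE V (E_elem V) W.
              \<phi> W (alg_add x y) = alg_add (\<phi> W x) (\<phi> W y)) \<and>
           (\<forall>W' h. is_qobj W' \<longrightarrow> h \<in> Hom W W' \<longrightarrow>
              (\<forall>x\<in>QE V (E_elem V) W. \<phi> W' (Qmap h x) = DQmap V W' h (\<phi> W x)))"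
    by (intro exI[of _ "aV V"] allI impI conjI ballI part2_bij part2_add part2_nat)
next
  fix Fob :: "qobj \<Rightarrow> 'b::ab_group_add set" and Fmor
  assume "is_functor Fob Fmor"
  then show "\<exists>\<Phi>. bij_betw \<Phi> (nat_trans_iso V Fob Fmor) (Falg Fmor V (E_elem V) ` Fob V) \<and>
              (\<forall>\<tau>\<in>nat_trans_iso V Fob Fmor. \<forall>\<sigma>\<in>nat_trans_iso V Fob Fmor.
                 \<Phi> (\<lambda>W S. \<tau> W S + \<sigma> W S) = \<Phi> \<tau> + \<Phi> \<sigma>)"
    by (rule part3[OF _ assms])
qed

end
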